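(* Let $k_1=(1,0)$, $k_2=(-\tfrac12,\tfrac{\sqrt3}{2})$, $k_3=(-\tfrac12,-\tfrac{\sqrt3}{2})$, let $\Lambda=\{x\in\mathbb R^2: k_1\cdot x\in2\pi\mathbb Z,\ k_2\cdot x\in2\pi\mathbb Z\}$, let $\phi(x)=\sum_{j=1}^3\cos(k_j\cdot x)$, and for $\varepsilon\in\mathbb R$ let $f_\varepsilon=Z_\varepsilon^{-1}e^{\varepsilon\phi}$ with $Z_\varepsilon=\langle e^{\varepsilon\phi}\rangle$, a probability density on the torus $\mathbb R^2/\Lambda$ with respect to normalized Haar measure. Then, as $\varepsilon\to0$, \[ \mathcal I[f_\varepsilon]=\tfrac32\varepsilon^2+\tfrac34\varepsilon^3+O(\varepsilon^4),\quad \mathcal Q[f_\varepsilon]=\tfrac32\varepsilon^2+\tfrac38\varepsilon^3+O(\varepsilon^4),\quad \mathcal D[f_\varepsilon]=\tfrac32\varepsilon^2-\tfrac3{16}\varepsilon^3+O(\varepsilon^4). \] Consequently \[ \mathcal I[f_\varepsilon]\mathcal D[f_\varepsilon]-\mathcal Q[f_\varepsilon]^2=-\tfrac9{32}\varepsilon^5+O(\varepsilon^6),\qquad \frac{\mathcal I[f_\varepsilon]\mathcal D[f_\varepsilon]}{\mathcal Q[f_\varepsilon]^2}=1-\tfrac18\varepsilon+O(\varepsilon^2), \] so $\mathcal I[f_\varepsilon]\mathcal D[f_\varepsilon]-\mathcal Q[f_\varepsilon]^2<0$ for all sufficiently small $\varepsilon>0$.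
   Context: $\langle G\rangle$ denotes the normalized Haar average of a $\Lambda$-periodic function $G$ (average over a fundamental cell). For a positive smooth density $f=e^u$ on the torus (normalized so $\langle f\rangle=1$), set $\mathsf H_f=-\nabla^2u$ and define $\mathcal I[f]=\langle\operatorname{tr}(\mathsf H_f)f\rangle$, $\mathcal Q[f]=\langle\operatorname{tr}(\mathsf H_f^2)f\rangle$, $\mathcal D[f]=\langle(|\nabla\mathsf H_f|^2+2\operatorname{tr}(\mathsf H_f^3))f\rangle$, where $|\nabla\mathsf H_f|^2=\sum_{i,j,k}(\partial_k(\mathsf H_f)_{ij})^2$. *)

theory Defs
  imports "HOL-Analysis.Analysis" "HOL-Library.Landau_Symbols"
begin

definition kv1 :: "real^2" where "kv1 = vector [1, 0]"
definition kv2 :: "real^2" where "kv2 = vector [-1/2, sqrt 3 / 2]"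
definition kv3 :: "real^2" where "kv3 = vector [-1/2, - sqrt 3 / 2]"

definition lattice :: "(real^2) set" where
  "lattice = {x. (\<exists>m::int. kv1 \<bullet> x = 2 * pi * m) \<and> (\<exists>n::int. kv2 \<bullet> x = 2 * pi * n)}"

definition cell :: "(real^2) set" where
  "cell = {x. 0 \<le> kv1 \<bullet> x \<and> kv1 \<bullet> x \<le> 2 * pi \<and> 0 \<le> kv2 \<bullet> x \<and> kv2 \<bullet> x \<le> 2 * pi}"

text \<open>Normalized Haar average: average over a fundamental cell.\<close>
definition haar_avg :: "(real^2 \<Rightarrow> real) \<Rightarrow> real" where
  "haar_avg G = integral cell G / measure lebesgue cell"

definition pd :: "2 \<Rightarrow> (real^2 \<Rightarrow> real) \<Rightarrow> real^2 \<Rightarrow> real" where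
  "pd i g x = deriv (\<lambda>t. g (x + t *\<^sub>R axis i 1)) 0"

definition Hf :: "(real^2 \<Rightarrow> real) \<Rightarrow> 2 \<Rightarrow> 2 \<Rightarrow> real^2 \<Rightarrow> real" where
  "Hf f i j x = - pd i (pd j (\<lambda>y. ln (f y))) x"

definition trH :: "(real^2 \<Rightarrow> real) \<Rightarrow> real^2 \<Rightarrow> real" where
  "trH f x = (\<Sum>i\<in>UNIV. Hf f i i x)"
definition trH2 :: "(real^2 \<Rightarrow> real) \<Rightarrow> real^2 \<Rightarrow> real" where
  "trH2 f x = (\<Sum>i\<in>UNIV. \<Sum>j\<in>UNIV. Hf f i j x * Hf f j i x)"
definition trH3 :: "(real^2 \<Rightarrow> real) \<Rightarrow> real^2 \<Rightarrow> real" where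
  "trH3 f x = (\<Sum>i\<in>UNIV. \<Sum>j\<in>UNIV. \<Sum>k\<in>UNIV. Hf f i j x * Hf f j k x * Hf f k i x)"
definition gradH_sq :: "(real^2 \<Rightarrow> real) \<Rightarrow> real^2 \<Rightarrow> real" where
  "gradH_sq f x = (\<Sum>i\<in>UNIV. \<Sum>j\<in>UNIV. \<Sum>k\<in>UNIV. (pd k (Hf f i j) x)\<^sup>2)"

definition Ifun :: "(real^2 \<Rightarrow> real) \<Rightarrow> real" where
  "Ifun f = haar_avg (\<lambda>x. trH f x * f x)"
definition Qfun :: "(real^2 \<Rightarrow> real) \<Rightarrow> real" where
  "Qfun f = haar_avg (\<lambda>x. trH2 f x * f x)"
definition Dfun :: "(real^2 \<Rightarrow> real) \<Rightarrow> real" where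
  "Dfun f = haar_avg (\<lambda>x. (gradH_sq f x + 2 * trH3 f x) * f x)"

definition phi :: "real^2 \<Rightarrow> real" where
  "phi x = cos (kv1 \<bullet> x) + cos (kv2 \<bullet> x) + cos (kv3 \<bullet> x)"

definition Zeps :: "real \<Rightarrow> real" where
  "Zeps e = haar_avg (\<lambda>x. exp (e * phi x))"

definition feps :: "real \<Rightarrow> real^2 \<Rightarrow> real" where
  "feps e x = exp (e * phi x) / Zeps e"

end

theory Submission
  imports Defs
begin


definition mm :: "nat \<Rightarrow> nat \<Rightarrow> real \<Rightarrow> real" where
  "mm i j x = cos x ^ i * sin x ^ j"

definition MM :: "nat \<Rightarrow> nat \<Rightarrow> real" where
  "MM i j = integral {0..2*pi} (mm i j) / (2*pi)"

lemma ftc_aux: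
  assumes "\<And>x. (F has_real_derivative f x) (at x)"
  shows "integral {0..2*pi} f = F (2*pi) - F 0"
proof -
  have "(f has_integral (F (2*pi) - F 0)) {0..2*pi}"
    apply (rule fundamental_theorem_of_calculus)
    using assms by (auto simp: has_real_derivative_iff_has_vector_derivative[symmetric]
        intro: has_field_derivative_at_within)
  then show ?thesis by (rule integral_unique)
qed

lemma MM_calc:
  assumes "\<And>x. (F has_real_derivative mm i j x) (at x)"
  shows "MM i j = (F (2*pi) - F 0) / (2*pi)"
  unfolding MM_def using ftc_aux[OF assms] by simp

lemma MM_calc2:
  assumes "(F (2*pi) - F 0) / (2*pi) = v" "\<And>x. (F has_real_derivative mm i j x) (at x)"
  shows "MM i j = v"
  using MM_calc[OF assms(2)] assms(1) by simp

lemma sc1: "sin x * sin x = 1 - cos x * cos x" for x :: real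
  using sin_cos_squared_add3[of x] by algebra

lemma MM_00[simp]: "MM 0 0 = 1"
  by (rule MM_calc2[where F="\<lambda>x. x"]) (auto intro!: derivative_eq_intros simp: mm_def)
lemma MM_10[simp]: "MM 1 0 = 0"
  by (rule MM_calc2[where F="\<lambda>x. sin x"]) (auto intro!: derivative_eq_intros simp: mm_def)
lemma MM_01[simp]: "MM 0 1 = 0"
  by (rule MM_calc2[where F="\<lambda>x. - cos x"]) (auto intro!: derivative_eq_intros simp: mm_def)
lemma MM_20[simp]: "MM 2 0 = 1/2"
  by (rule MM_calc2[where F="\<lambda>x. (x + sin x * cos x)/2"], simp)
     (auto intro!: derivative_eq_intros simp: mm_def power2_eq_square algebra_simps sc1; simp add: field_simps sin_two_pi cos_two_pi)
lemma MM_02[simp]: "MM 0 2 = 1/2"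
  by (rule MM_calc2[where F="\<lambda>x. (x - sin x * cos x)/2"], simp)
     (auto intro!: derivative_eq_intros simp: mm_def power2_eq_square algebra_simps sc1; simp add: field_simps sin_two_pi cos_two_pi)
lemma MM_11[simp]: "MM 1 1 = 0"
  by (rule MM_calc2[where F="\<lambda>x. sin x ^ 2 / 2"], simp)
     (auto intro!: derivative_eq_intros simp: mm_def)
lemma MM_30[simp]: "MM 3 0 = 0"
  by (rule MM_calc2[where F="\<lambda>x. sin x - sin x ^ 3 / 3"], simp)
     (auto intro!: derivative_eq_intros simp: mm_def power2_eq_square power3_eq_cube algebra_simps sc1; simp add: field_simps sin_two_pi cos_two_pi)
lemma MM_21[simp]: "MM 2 1 = 0"
  by (rule MM_calc2[where F="\<lambda>x. -(cos x ^ 3) / 3"], simp)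
     (auto intro!: derivative_eq_intros simp: mm_def power2_eq_square)
lemma MM_12[simp]: "MM 1 2 = 0"
  by (rule MM_calc2[where F="\<lambda>x. sin x ^ 3 / 3"], simp)
     (auto intro!: derivative_eq_intros simp: mm_def power2_eq_square)
lemma MM_03[simp]: "MM 0 3 = 0"
  by (rule MM_calc2[where F="\<lambda>x. cos x ^ 3 / 3 - cos x"], simp)
     (auto intro!: derivative_eq_intros simp: mm_def power2_eq_square power3_eq_cube algebra_simps sc1; simp add: field_simps sin_two_pi cos_two_pi)


lemmas MM_Suc[simp] = MM_10[unfolded One_nat_def] MM_01[unfolded One_nat_def]
  MM_11[unfolded One_nat_def] MM_21[unfolded One_nat_def] MM_12[unfolded One_nat_def]

definition Avg2 :: "(real \<times> real \<Rightarrow> real) \<Rightarrow> real" where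
  "Avg2 F = integral (cbox (0,0) (2*pi,2*pi)) F / (4*pi^2)"

lemma Avg2_prod:
  assumes "continuous_on UNIV f" "continuous_on UNIV g"
  shows "Avg2 (\<lambda>p. f (fst p) * g (snd p)) =
     (integral {0..2*pi} f / (2*pi)) * (integral {0..2*pi} g / (2*pi))"
proof -
  have c: "continuous_on (cbox (0,0) (2*pi,2*pi)) (\<lambda>p::real\<times>real. f (fst p) * g (snd p))"
    by (intro continuous_intros continuous_on_compose2[OF assms(1)] continuous_on_compose2[OF assms(2)]) auto
  have "integral (cbox (0,0) (2*pi,2*pi)) (\<lambda>p::real\<times>real. f (fst p) * g (snd p))
      = integral (cbox 0 (2*pi)) (\<lambda>x. integral (cbox 0 (2*pi)) (\<lambda>y. f x * g y))"
    using integral_prod_continuous[OF c] by simp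
  also have "\<dots> = integral {0..2*pi} f * integral {0..2*pi} g"
    by (simp add: cbox_interval)
  finally show ?thesis unfolding Avg2_def by (simp add: power2_eq_square field_simps)
qed

lemma cont_mm[continuous_intros]: "continuous_on S (mm i j)"
  unfolding mm_def by (intro continuous_intros)

lemma Avg2_mm: "Avg2 (\<lambda>p. mm i j (fst p) * mm k l (snd p)) = MM i j * MM k l"
  unfolding MM_def by (rule Avg2_prod) (rule cont_mm)+

lemma Avg2_add:
  assumes "continuous_on UNIV F" "continuous_on UNIV G"
  shows "Avg2 (\<lambda>p. F p + G p) = Avg2 F + Avg2 G"
proof -
  have "F integrable_on cbox (0,0) (2*pi,2*pi)" "G integrable_on cbox (0,0) (2*pi,2*pi)"
    by (rule integrable_continuous, rule continuous_on_subset[OF assms(1)], simp)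
       (rule integrable_continuous, rule continuous_on_subset[OF assms(2)], simp)
  then show ?thesis unfolding Avg2_def by (simp add: integral_add add_divide_distrib)
qed

lemma Avg2_cmult: "Avg2 (\<lambda>p. c * F p) = c * Avg2 F"
  unfolding Avg2_def by simp

fun tsum :: "(real \<times> nat \<times> nat \<times> nat \<times> nat) list \<Rightarrow> real \<times> real \<Rightarrow> real" where
  "tsum [] p = 0"
| "tsum ((c,i,j,k,l)#ts) p = c * (mm i j (fst p) * mm k l (snd p)) + tsum ts p"

fun tavg :: "(real \<times> nat \<times> nat \<times> nat \<times> nat) list \<Rightarrow> real" where
  "tavg [] = 0"
| "tavg ((c,i,j,k,l)#ts) = c * (MM i j * MM k l) + tavg ts"

lemma cont_tsum: "continuous_on S (tsum ts)"
proof (induction ts)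
  case Nil then show ?case by (simp add: continuous_on_const)
next
  case (Cons t ts)
  obtain c i j k l where t: "t = (c,i,j,k,l)" by (cases t) auto
  have "continuous_on S (\<lambda>p. c * (mm i j (fst p) * mm k l (snd p)) + tsum ts p)"
    by (intro continuous_intros continuous_on_compose2[OF cont_mm] Cons) auto
  then show ?case by (simp add: t)
qed

lemma Avg2_tsum: "Avg2 (tsum ts) = tavg ts"
proof (induction ts)
  case Nil then show ?case by (simp add: Avg2_def)
next
  case (Cons t ts)
  obtain c i j k l where t: "t = (c,i,j,k,l)" by (cases t) auto
  have "Avg2 (\<lambda>p. c * (mm i j (fst p) * mm k l (snd p)) + tsum ts p) =
        Avg2 (\<lambda>p. c * (mm i j (fst p) * mm k l (snd p))) + Avg2 (tsum ts)"
    by (rule Avg2_add) (intro continuous_intros continuous_on_compose2[OF cont_mm] cont_tsum; auto)+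
  also have "\<dots> = c * (MM i j * MM k l) + tavg ts"
    using Cons by (simp add: Avg2_cmult Avg2_mm)
  finally show ?case by (simp add: t)
qed

lemma Avg2_cong: "(\<And>p. F p = G p) \<Longrightarrow> Avg2 F = Avg2 G"
  by (metis ext)

definition psi :: "real \<times> real \<Rightarrow> real" where
  "psi p = cos (fst p) + cos (snd p) + cos (fst p + snd p)"

definition T2f :: "real \<times> real \<Rightarrow> real" where
  "T2f p = (let c1 = cos (fst p); c2 = cos (snd p); c3 = cos (fst p + snd p) in
     c1^2 + c2^2 + c3^2 + (c1*c2 + c1*c3 + c2*c3)/2)"

definition Gf :: "real \<times> real \<Rightarrow> real" where
  "Gf p = (let s1 = sin (fst p); s2 = sin (snd p); s3 = - sin (fst p + snd p) in
     s1^2 + s2^2 + s3^2 - (s1 * s2 + s1 * s3 + s2 * s3)/4)"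

definition T3f :: "real \<times> real \<Rightarrow> real" where
  "T3f p = (let c1 = cos (fst p); c2 = cos (snd p); c3 = cos (fst p + snd p) in
     c1^3 + c2^3 + c3^3 + 3/4 * (c1^2*c2 + c1^2*c3 + c2^2*c1 + c2^2*c3 + c3^2*c1 + c3^2*c2)
     - 3/4 * (c1*c2*c3))"

lemma cont_psi[continuous_intros]: "continuous_on S psi"
  unfolding psi_def by (intro continuous_intros)
lemma cont_T2f[continuous_intros]: "continuous_on S T2f"
  unfolding T2f_def Let_def by (auto intro!: continuous_intros)
lemma cont_Gf[continuous_intros]: "continuous_on S Gf"
  unfolding Gf_def Let_def by (auto intro!: continuous_intros)
lemma cont_T3f[continuous_intros]: "continuous_on S T3f"
  unfolding T3f_def Let_def by (intro continuous_intros)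

definition tscale :: "real \<Rightarrow> (real \<times> nat \<times> nat \<times> nat \<times> nat) list \<Rightarrow> (real \<times> nat \<times> nat \<times> nat \<times> nat) list" where
  "tscale a L = map (\<lambda>(c,i,j,k,l). (a*c,i,j,k,l)) L"

definition tmul :: "(real \<times> nat \<times> nat \<times> nat \<times> nat) list \<Rightarrow> (real \<times> nat \<times> nat \<times> nat \<times> nat) list \<Rightarrow> (real \<times> nat \<times> nat \<times> nat \<times> nat) list" where
  "tmul L1 L2 = concat (map (\<lambda>(c,i,j,k,l). map (\<lambda>(c',i',j',k',l'). (c*c', i+i', j+j', k+k', l+l')) L2) L1)"

lemma tsum_append: "tsum (L1 @ L2) p = tsum L1 p + tsum L2 p"
proof (induction L1)
  case (Cons t ts) then show ?case by (cases t) auto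
qed simp

lemma tsum_tscale: "tsum (tscale a L) p = a * tsum L p"
proof (induction L)
  case (Cons t ts) then show ?case by (cases t) (auto simp: tscale_def algebra_simps)
qed (simp add: tscale_def)

lemma mm_mult: "mm i j x * mm i' j' x = mm (i+i') (j+j') x"
  by (simp add: mm_def power_add)

lemma tsum_single_mul: "tsum (map (\<lambda>(c',i',j',k',l'). (c*c', i+i', j+j', k+k', l+l')) L2) p
   = c * (mm i j (fst p) * mm k l (snd p)) * tsum L2 p"
proof (induction L2)
  case (Cons t ts) then show ?case by (cases t) (auto simp: algebra_simps mm_mult[symmetric])
qed simp

lemma tsum_tmul: "tsum (tmul L1 L2) p = tsum L1 p * tsum L2 p"
proof (induction L1)
  case (Cons t ts) then show ?case
    by (cases t) (auto simp: tmul_def tsum_append tsum_single_mul algebra_simps)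
qed (simp add: tmul_def)

definition "LC1 = [(1::real,1::nat,0::nat,0::nat,0::nat)]"
definition "LC2 = [(1::real,0::nat,0::nat,1::nat,0::nat)]"
definition "LC3 = [(1::real,1::nat,0::nat,1::nat,0::nat), (-1,0,1,0,1)]"
definition "LS1 = [(1::real,0::nat,1::nat,0::nat,0::nat)]"
definition "LS2 = [(1::real,0::nat,0::nat,0::nat,1::nat)]"
definition "LS3 = [(-1::real,0::nat,1::nat,1::nat,0::nat), (-1,1,0,0,1)]"

lemma tsum_LC1: "tsum LC1 p = cos (fst p)" by (simp add: LC1_def mm_def)
lemma tsum_LC2: "tsum LC2 p = cos (snd p)" by (simp add: LC2_def mm_def)
lemma tsum_LC3: "tsum LC3 p = cos (fst p + snd p)" by (simp add: LC3_def mm_def cos_add)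
lemma tsum_LS1: "tsum LS1 p = sin (fst p)" by (simp add: LS1_def mm_def)
lemma tsum_LS2: "tsum LS2 p = sin (snd p)" by (simp add: LS2_def mm_def)
lemma tsum_LS3: "tsum LS3 p = - sin (fst p + snd p)" by (simp add: LS3_def mm_def sin_add)

definition "LPSI = LC1 @ LC2 @ LC3"
definition "LT2 = tmul LC1 LC1 @ tmul LC2 LC2 @ tmul LC3 LC3 @
   tscale (1/2) (tmul LC1 LC2 @ tmul LC1 LC3 @ tmul LC2 LC3)"
definition "LG = tmul LS1 LS1 @ tmul LS2 LS2 @ tmul LS3 LS3 @
   tscale (-1/4) (tmul LS1 LS2 @ tmul LS1 LS3 @ tmul LS2 LS3)"
definition "LT3 = tmul LC1 (tmul LC1 LC1) @ tmul LC2 (tmul LC2 LC2) @ tmul LC3 (tmul LC3 LC3) @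
   tscale (3/4) (tmul (tmul LC1 LC1) LC2 @ tmul (tmul LC1 LC1) LC3 @ tmul (tmul LC2 LC2) LC1 @
      tmul (tmul LC2 LC2) LC3 @ tmul (tmul LC3 LC3) LC1 @ tmul (tmul LC3 LC3) LC2) @
   tscale (-3/4) (tmul (tmul LC1 LC2) LC3)"

lemmas tsum_rules = tsum_append tsum_tscale tsum_tmul tsum_LC1 tsum_LC2 tsum_LC3 tsum_LS1 tsum_LS2 tsum_LS3

lemma psi_tsum: "psi = tsum LPSI"
  by (rule ext) (simp add: LPSI_def tsum_rules psi_def)
lemma T2f_tsum: "T2f = tsum LT2"
  by (rule ext) (simp add: LT2_def tsum_rules T2f_def Let_def power2_eq_square)
lemma Gf_tsum: "Gf = tsum LG"
  by (rule ext) (simp add: LG_def tsum_rules Gf_def Let_def power2_eq_square field_simps)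
lemma T3f_tsum: "T3f = tsum LT3"
  by (rule ext) (simp add: LT3_def tsum_rules T3f_def Let_def power2_eq_square power3_eq_cube algebra_simps)

lemma prod_tsum: "(\<lambda>p. tsum L1 p * tsum L2 p) = tsum (tmul L1 L2)"
  by (rule ext) (simp add: tsum_tmul)

lemmas MM_S[simp] = MM_00 MM_10 MM_01 MM_20 MM_02 MM_11 MM_30 MM_21 MM_12 MM_03
lemmas MM_Suc_all = MM_S[unfolded numeral_3_eq_3 numeral_2_eq_2 One_nat_def]

lemmas Ldefs = MM_Suc_all eval_nat_numeral LPSI_def LT2_def LG_def LT3_def LC1_def LC2_def LC3_def LS1_def LS2_def LS3_def
  tmul_def tscale_def

lemma avg_one: "Avg2 (\<lambda>p. 1) = 1"
proof -
  have "(\<lambda>p::real\<times>real. 1::real) = tsum [(1,0,0,0,0)]" by (rule ext) (simp add: mm_def)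
  then show ?thesis by (simp add: Avg2_tsum)
qed
lemma avg_psi: "Avg2 psi = 0"
  unfolding psi_tsum Avg2_tsum by (simp add: Ldefs)
lemma avg_psi2: "Avg2 (\<lambda>p. psi p * psi p) = 3/2"
  by (simp only: psi_tsum T2f_tsum Gf_tsum tsum_tmul[symmetric] Avg2_tsum, simp add: Ldefs)
lemma avg_psi3: "Avg2 (\<lambda>p. psi p * psi p * psi p) = 3/2"
  by (simp only: psi_tsum T2f_tsum Gf_tsum tsum_tmul[symmetric] Avg2_tsum, simp add: Ldefs)
lemma avg_T2: "Avg2 T2f = 3/2"
  unfolding T2f_tsum Avg2_tsum by (simp add: Ldefs)
lemma avg_T2psi: "Avg2 (\<lambda>p. T2f p * psi p) = 3/8"
  by (simp only: psi_tsum T2f_tsum Gf_tsum tsum_tmul[symmetric] Avg2_tsum, simp add: Ldefs)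
lemma avg_G: "Avg2 Gf = 3/2"
  unfolding Gf_tsum Avg2_tsum by (simp add: Ldefs)
lemma avg_Gpsi: "Avg2 (\<lambda>p. Gf p * psi p) = 3/16"
  by (simp only: psi_tsum T2f_tsum Gf_tsum tsum_tmul[symmetric] Avg2_tsum, simp add: Ldefs)
lemma avg_T3: "Avg2 T3f = -3/16"
  unfolding T3f_tsum Avg2_tsum by (simp add: Ldefs)


lemma kv1_inner: "kv1 \<bullet> x = x$1"
  by (simp add: kv1_def inner_vec_def sum_2)
lemma kv2_inner: "kv2 \<bullet> x = -x$1/2 + sqrt 3/2 * x$2"
  by (simp add: kv2_def inner_vec_def sum_2)
lemma kv3_inner: "kv3 \<bullet> x = -x$1/2 - sqrt 3/2 * x$2"
  by (simp add: kv3_def inner_vec_def sum_2)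
lemma kv3_eq: "kv3 \<bullet> x = - (kv1 \<bullet> x) - (kv2 \<bullet> x)"
  by (simp add: kv1_inner kv2_inner kv3_inner)

definition theta :: "real^2 \<Rightarrow> real \<times> real" where "theta x = (kv1 \<bullet> x, kv2 \<bullet> x)"
definition hvec :: "real \<times> real \<Rightarrow> real^2" where "hvec p = vector [fst p, snd p]"
definition Tinv :: "real^2 \<Rightarrow> real^2" where "Tinv y = vector [y$1, (y$1 + 2 * y$2) / sqrt 3]"

lemma vec2_eq: "(x::real^2) = y \<longleftrightarrow> x$1 = y$1 \<and> x$2 = y$2"
  by (simp add: vec_eq_iff forall_2)
lemma hvec_nth[simp]: "hvec p $ 1 = fst p" "hvec p $ 2 = snd p"
  by (simp_all add: hvec_def)
lemma sqrt3_sq[simp]: "sqrt 3 * sqrt 3 = 3" "sqrt 3 * (sqrt 3 * x) = 3 * x"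
  by (simp_all add: mult.assoc[symmetric])

lemma linear_Tinv: "linear Tinv"
  by (rule linearI) (simp_all add: Tinv_def vec2_eq field_simps real_sqrt_mult_self)
lemma theta_Tinv: "theta (Tinv y) = (y$1, y$2)"
  unfolding theta_def Tinv_def kv1_inner kv2_inner by (simp add: field_simps)
lemma Tinv_hvec_theta: "Tinv (hvec (theta x)) = x"
  unfolding theta_def Tinv_def kv1_inner kv2_inner vec2_eq by (simp add: field_simps)
lemma hvec_fst_snd: "hvec (y$1, y$2) = y"
  by (simp add: vec2_eq)

definition C0 :: "(real \<times> real) set" where "C0 = cbox (0,0) (2*pi, 2*pi)"

lemma cell_iff: "x \<in> cell \<longleftrightarrow> theta x \<in> C0"
  by (auto simp: cell_def theta_def C0_def cbox_interval)

lemma cell_eq: "cell = Tinv ` hvec ` C0"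
proof
  show "cell \<subseteq> Tinv ` hvec ` C0"
  proof
    fix x assume "x \<in> cell"
    then have "theta x \<in> C0" by (simp add: cell_iff)
    then show "x \<in> Tinv ` hvec ` C0"
      using Tinv_hvec_theta[of x] by (metis image_eqI)
  qed
  show "Tinv ` hvec ` C0 \<subseteq> cell"
    by (auto simp: cell_iff theta_Tinv)
qed

lemma hvec_image: "hvec ` cbox u v = cbox (hvec u) (hvec v)"
proof
  show "hvec ` cbox u v \<subseteq> cbox (hvec u) (hvec v)"
  proof
    fix y assume "y \<in> hvec ` cbox u v"
    then obtain a b where ab: "(a,b) \<in> cbox u v" "y = hvec (a,b)" by auto
    then show "y \<in> cbox (hvec u) (hvec v)"
      by (cases u; cases v) (auto simp: mem_box_cart forall_2 cbox_interval less_eq_vec_def)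
  qed
  show "cbox (hvec u) (hvec v) \<subseteq> hvec ` cbox u v"
  proof
    fix y assume "y \<in> cbox (hvec u) (hvec v)"
    then have "(y$1, y$2) \<in> cbox u v"
      by (cases u; cases v) (auto simp: mem_box_cart forall_2 cbox_interval less_eq_vec_def)
    then show "y \<in> hvec ` cbox u v" using hvec_fst_snd[of y] by (metis image_eqI)
  qed
qed

lemma g_image: "(\<lambda>y::real^2. (y$1, y$2)) ` cbox u v = cbox (u$1,u$2) (v$1,v$2)"
proof -
  have "cbox u v = hvec ` cbox (u$1,u$2) (v$1,v$2)"
    by (simp add: hvec_image hvec_fst_snd)
  then show ?thesis by (simp add: image_image hvec_def)
qed

lemma content_cart2: "measure lborel (cbox (u::real^2) v) = measure lborel (cbox (u$1,u$2) (v$1,v$2))"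
proof (cases "cbox u v = {}")
  case True
  then have "cbox (u$1,u$2) (v$1,v$2) = {}" using g_image[of u v] by simp
  then show ?thesis using True by simp
next
  case False
  then obtain x where "x \<in> cbox u v" by blast
  then have "u$1 \<le> v$1" "u$2 \<le> v$2" by (simp_all add: mem_box_cart) (meson order_trans)+
  then show ?thesis using False by (simp add: content_cbox_cart content_Pair UNIV_2)
qed

lemma twiddle:
  fixes F :: "real \<times> real \<Rightarrow> real"
  assumes "continuous_on UNIV F"
  shows "integral (hvec ` C0) (\<lambda>y. F (y$1, y$2)) = integral C0 F"
proof -
  have i: "(F has_integral integral C0 F) (cbox (0,0) (2*pi,2*pi))"
    by (simp add: C0_def integrable_continuous continuous_on_subset[OF assms] integrable_integral)
  have "((\<lambda>y. F ((\<lambda>y::real^2. (y$1,y$2)) y)) has_integral (1/1) *\<^sub>R integral C0 F) (hvec ` cbox (0,0) (2*pi,2*pi))"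
  proof (rule has_integral_twiddle[where g="\<lambda>y::real^2. (y$1,y$2)" and h=hvec and r=1])
    show "\<And>x. hvec (x $ 1, x $ 2) = x" by (rule hvec_fst_snd)
    show "\<And>x. (hvec x $ 1, hvec x $ 2) = x" by simp
    show "\<And>x. continuous (at x) (\<lambda>y::real^2. (y $ 1, y $ 2))" by (intro continuous_intros)
    show "\<And>u v. \<exists>w z. (\<lambda>y::real^2. (y $ 1, y $ 2)) ` cbox u v = cbox w z" using g_image by blast
    show "\<And>u v. \<exists>w z. hvec ` cbox u v = cbox w z" using hvec_image by blast
    show "\<And>u v. measure lborel ((\<lambda>y::real^2. (y $ 1, y $ 2)) ` cbox u v) = 1 * measure lborel (cbox u v)"
      by (simp add: g_image content_cart2)
  qed (use i in auto)
  then show ?thesis unfolding C0_def by (simp add: integral_unique)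
qed

lemma det_Tinv: "det (matrix Tinv) = 2 / sqrt 3"
  by (simp add: det_2 matrix_def Tinv_def axis_def field_simps)

lemma B_eq: "hvec ` C0 = cbox (hvec (0,0)) (hvec (2*pi,2*pi))"
  by (simp add: C0_def hvec_image)

lemma one11[simp]: "(1::real^1) \<bullet> 1 = 1"
  by (simp add: inner_vec_def)

lemma one1: "((c::real) *\<^sub>R (1::real^1)) \<bullet> 1 = c"
  by (simp add: inner_vec_def)

lemma cov:
  assumes "continuous_on UNIV H"
  shows "integral cell H = \<bar>det (matrix Tinv)\<bar> * integral (hvec ` C0) (\<lambda>y. H (Tinv y))"
proof -
  define H1 where "H1 = (\<lambda>x. H x *\<^sub>R (1::real^1))"
  have cH1: "continuous_on UNIV H1" unfolding H1_def by (intro continuous_intros assms)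
  have cT: "continuous_on UNIV Tinv"
    by (simp add: linear_Tinv linear_continuous_on linear_linear)
  have ai: "(H1 \<circ> Tinv) absolutely_integrable_on hvec ` C0"
    unfolding B_eq by (rule absolutely_integrable_continuous, rule continuous_on_subset[OF continuous_on_compose[OF cT continuous_on_subset[OF cH1]]]) auto
  have eq: "integral (Tinv ` hvec ` C0) H1 = \<bar>det (matrix Tinv)\<bar> *\<^sub>R integral (hvec ` C0) (H1 \<circ> Tinv)"
    by (rule integral_change_of_variables_linear[OF linear_Tinv]) (use ai in blast)
  have ai2: "H1 absolutely_integrable_on (Tinv ` hvec ` C0)"
    using absolutely_integrable_on_linear_image[OF linear_Tinv] ai by blast
  have int1: "H1 integrable_on cell" using ai2 cell_eq set_lebesgue_integral_eq_integral(1) by metis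
  have int2: "(H1 \<circ> Tinv) integrable_on hvec ` C0" using ai set_lebesgue_integral_eq_integral(1) by metis
  have "integral cell H = integral cell (\<lambda>x. H1 x \<bullet> 1)" by (simp add: H1_def one1)
  also have "\<dots> = integral cell H1 \<bullet> 1" using int1 by simp
  also have "\<dots> = (\<bar>det (matrix Tinv)\<bar> *\<^sub>R integral (hvec ` C0) (H1 \<circ> Tinv)) \<bullet> 1"
    using eq cell_eq by simp
  also have "\<dots> = \<bar>det (matrix Tinv)\<bar> * (integral (hvec ` C0) (H1 \<circ> Tinv) \<bullet> 1)"
    by simp
  also have "integral (hvec ` C0) (H1 \<circ> Tinv) \<bullet> 1 = integral (hvec ` C0) (\<lambda>y. (H1 \<circ> Tinv) y \<bullet> 1)"
    using integral_component_eq[OF int2, of 1] by (simp add: o_def)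
  also have "\<dots> = integral (hvec ` C0) (\<lambda>y. H (Tinv y))" by (simp add: H1_def one1)
  finally show ?thesis .
qed

lemma C0_int1: "integral C0 (\<lambda>p. 1::real) = 4 * pi^2"
  by (simp add: C0_def content_Pair power2_eq_square)

lemma cont_theta: "continuous_on S theta"
  unfolding theta_def by (intro continuous_intros)

lemma haar_theta:
  assumes "continuous_on UNIV F"
  shows "haar_avg (\<lambda>x. F (theta x)) = Avg2 F"
proof -
  define d where "d = \<bar>det (matrix Tinv)\<bar>"
  have d0: "d \<noteq> 0" by (simp add: d_def det_Tinv)
  have cG: "continuous_on UNIV (\<lambda>x. F (theta x))"
    by (rule continuous_on_compose2[OF assms cont_theta]) auto
  have c2: "continuous_on UNIV (\<lambda>y::real^2. F (y$1, y$2))"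
    by (rule continuous_on_compose2[OF assms]) (intro continuous_intros, auto)
  have "integral cell (\<lambda>x. F (theta x)) = d * integral (hvec ` C0) (\<lambda>y. F (theta (Tinv y)))"
    unfolding d_def by (rule cov[OF cG])
  also have "\<dots> = d * integral C0 F" by (simp add: theta_Tinv twiddle[OF assms])
  finally have num: "integral cell (\<lambda>x. F (theta x)) = d * integral C0 F" .
  have "cell \<in> lmeasurable" unfolding cell_eq B_eq by (rule measurable_linear_image_interval[OF linear_Tinv])
  then have "measure lebesgue cell = integral cell (\<lambda>x. 1::real)" by (rule lmeasure_integral)
  also have "\<dots> = d * integral (hvec ` C0) (\<lambda>y. 1::real)" unfolding d_def by (rule cov) simp
  also have "\<dots> = d * (4 * pi^2)"
    using twiddle[of "\<lambda>p. 1::real"] C0_int1 by simp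
  finally have den: "measure lebesgue cell = d * (4 * pi^2)" .
  show ?thesis unfolding haar_avg_def Avg2_def num den C0_def using d0 by simp
qed


lemma inner_shift: "(k::real^2) \<bullet> (x + t *\<^sub>R axis j 1) = k \<bullet> x + t * k$j"
  by (simp add: inner_add_right inner_axis)

lemma pd_gen:
  "pd j (\<lambda>y. c0 + (a1 * cos (k1 \<bullet> y) + b1 * sin (k1 \<bullet> y)) + (a2 * cos (k2 \<bullet> y) + b2 * sin (k2 \<bullet> y))
        + (a3 * cos (k3 \<bullet> y) + b3 * sin (k3 \<bullet> y))) x =
   (b1 * cos (k1 \<bullet> x) - a1 * sin (k1 \<bullet> x)) * k1$j + (b2 * cos (k2 \<bullet> x) - a2 * sin (k2 \<bullet> x)) * k2$j
   + (b3 * cos (k3 \<bullet> x) - a3 * sin (k3 \<bullet> x)) * k3$j"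
  unfolding pd_def inner_shift
  by (rule DERIV_imp_deriv) (auto intro!: derivative_eq_intros simp: algebra_simps)

lemma cos_nab: "cos (- a - b) = cos (a + b)"
proof -
  have "- a - b = -(a+b)" by simp
  then show ?thesis by (simp only: cos_minus)
qed
lemma sin_nab: "sin (- a - b) = - sin (a + b)"
proof -
  have "- a - b = -(a+b)" by simp
  then show ?thesis by (simp only: sin_minus)
qed

lemma phi_theta: "phi x = psi (theta x)"
  by (simp add: phi_def psi_def theta_def kv3_eq cos_nab)

lemma kv_comp[simp]: "kv1$1 = 1" "kv1$2 = 0" "kv2$1 = -1/2" "kv2$2 = sqrt 3/2" "kv3$1 = -1/2" "kv3$2 = - sqrt 3/2"
  by (simp_all add: kv1_def kv2_def kv3_def)

lemma ln_feps:
  assumes "Zeps e > 0"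
  shows "(\<lambda>y. ln (feps e y)) = (\<lambda>y. (- ln (Zeps e)) + (e * cos (kv1 \<bullet> y) + 0 * sin (kv1 \<bullet> y))
     + (e * cos (kv2 \<bullet> y) + 0 * sin (kv2 \<bullet> y)) + (e * cos (kv3 \<bullet> y) + 0 * sin (kv3 \<bullet> y)))"
  using assms by (auto simp: feps_def ln_div phi_def algebra_simps)

lemma pd_ln_feps:
  assumes "Zeps e > 0"
  shows "pd j (\<lambda>y. ln (feps e y)) = (\<lambda>y. 0 + (0 * cos (kv1 \<bullet> y) + (- e * kv1$j) * sin (kv1 \<bullet> y))
     + (0 * cos (kv2 \<bullet> y) + (- e * kv2$j) * sin (kv2 \<bullet> y)) + (0 * cos (kv3 \<bullet> y) + (- e * kv3$j) * sin (kv3 \<bullet> y)))"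
  by (rule ext) (simp only: ln_feps[OF assms] pd_gen, simp)

lemma Hf_fun:
  assumes "Zeps e > 0"
  shows "Hf (feps e) i j = (\<lambda>y. 0 + ((e * kv1$j * kv1$i) * cos (kv1 \<bullet> y) + 0 * sin (kv1 \<bullet> y))
     + ((e * kv2$j * kv2$i) * cos (kv2 \<bullet> y) + 0 * sin (kv2 \<bullet> y)) + ((e * kv3$j * kv3$i) * cos (kv3 \<bullet> y) + 0 * sin (kv3 \<bullet> y)))"
  by (rule ext) (simp only: Hf_def pd_ln_feps[OF assms] pd_gen, simp)

lemma dHf:
  assumes "Zeps e > 0"
  shows "pd k (Hf (feps e) i j) x = - e * (kv1$j * kv1$i * kv1$k * sin (kv1 \<bullet> x)
     + kv2$j * kv2$i * kv2$k * sin (kv2 \<bullet> x) + kv3$j * kv3$i * kv3$k * sin (kv3 \<bullet> x))"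
  by (simp only: Hf_fun[OF assms] pd_gen, simp add: algebra_simps)

lemma Hf_val:
  assumes "Zeps e > 0"
  shows "Hf (feps e) i j x = e * (kv1$j * kv1$i * cos (kv1 \<bullet> x)
     + kv2$j * kv2$i * cos (kv2 \<bullet> x) + kv3$j * kv3$i * cos (kv3 \<bullet> x))"
  by (simp add: Hf_fun[OF assms] algebra_simps)

lemma cos3: "cos (kv3 \<bullet> x) = cos (fst (theta x) + snd (theta x))"
  by (simp add: kv3_eq theta_def cos_nab sin_nab)
lemma sin3: "sin (kv3 \<bullet> x) = - sin (fst (theta x) + snd (theta x))"
  by (simp add: kv3_eq theta_def cos_nab sin_nab)
lemma cs12: "cos (kv1 \<bullet> x) = cos (fst (theta x))" "cos (kv2 \<bullet> x) = cos (snd (theta x))"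
  "sin (kv1 \<bullet> x) = sin (fst (theta x))" "sin (kv2 \<bullet> x) = sin (snd (theta x))"
  by (simp_all add: theta_def)

lemma trH_eq:
  assumes "Zeps e > 0"
  shows "trH (feps e) x = e * psi (theta x)"
  by (simp add: trH_def sum_2 Hf_val[OF assms] psi_def cos3 cs12 field_simps)

lemma trH2_eq:
  assumes "Zeps e > 0"
  shows "trH2 (feps e) x = e^2 * T2f (theta x)"
  by (simp add: trH2_def sum_2 Hf_val[OF assms] T2f_def Let_def cos3 cs12 field_simps power2_eq_square)

lemma trH3_eq:
  assumes "Zeps e > 0"
  shows "trH3 (feps e) x = e^3 * T3f (theta x)"
  by (simp add: trH3_def sum_2 Hf_val[OF assms] T3f_def Let_def cos3 cs12 field_simps power2_eq_square power3_eq_cube)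

lemma gradH_eq:
  assumes "Zeps e > 0"
  shows "gradH_sq (feps e) x = e^2 * Gf (theta x)"
  by (simp add: gradH_sq_def sum_2 dHf[OF assms] Gf_def Let_def sin3 cs12 field_simps power2_eq_square)


lemma psi_bound: "\<bar>psi p\<bar> \<le> 3"
  unfolding psi_def using abs_cos_le_one[of "fst p"] abs_cos_le_one[of "snd p"] abs_cos_le_one[of "fst p + snd p"]
  by linarith

lemma exp_taylor:
  fixes y :: real
  assumes "\<bar>y\<bar> \<le> 3"
  shows "\<bar>exp y - (1 + y + y^2/2)\<bar> \<le> exp 3 / 6 * \<bar>y\<bar>^3"
proof -
  obtain t where t: "\<bar>t\<bar> \<le> \<bar>y\<bar>" "exp y = (\<Sum>m<3. y^m / fact m) + exp t / fact 3 * y^3"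
    using Maclaurin_exp_le[of y 3] by blast
  have s: "(\<Sum>m<3. y^m / fact m) = 1 + y + y^2/2"
    by (simp add: numeral_3_eq_3 fact_numeral power2_eq_square)
  have f3: "fact 3 = (6::real)" by (simp add: fact_numeral)
  have "exp t \<le> exp 3" using t(1) assms by simp
  then have "\<bar>exp t / 6 * y^3\<bar> \<le> exp 3 / 6 * \<bar>y\<bar>^3"
    by (simp add: abs_mult power_abs mult_right_mono)
  then show ?thesis using t(2) s f3 by simp
qed

lemma C0_content: "measure lborel C0 = 4 * pi^2"
  by (simp add: C0_def content_Pair power2_eq_square)

lemma Avg2_bound:
  assumes "continuous_on UNIV H" "\<And>p. p \<in> C0 \<Longrightarrow> \<bar>H p\<bar> \<le> K"
  shows "\<bar>Avg2 H\<bar> \<le> K"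
proof -
  have K0: "0 \<le> K" using assms(2)[of "(0,0)"] by (auto simp: C0_def)
  have hi: "(H has_integral integral C0 H) C0"
    by (simp add: C0_def integrable_continuous continuous_on_subset[OF assms(1)] integrable_integral)
  have "norm (integral C0 H) \<le> K * measure lborel C0"
    using has_integral_bound[OF K0 hi[unfolded C0_def]] assms(2) by (simp add: C0_def)
  then show ?thesis by (simp add: Avg2_def C0_content C0_def[symmetric] divide_le_eq)
qed

lemma Avg2_lower:
  assumes "continuous_on UNIV H" "\<And>p. H p \<ge> m"
  shows "Avg2 H \<ge> m"
proof -
  have "integral C0 (\<lambda>p. m) \<le> integral C0 H"
    by (rule integral_le) (auto simp: C0_def assms integrable_continuous continuous_on_subset[OF assms(1)])
  moreover have "integral C0 (\<lambda>p. m) = m * (4*pi^2)"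
    by (simp add: C0_def content_Pair power2_eq_square)
  ultimately have "m * (4*pi^2) \<le> integral C0 H" by simp
  then show ?thesis by (simp add: Avg2_def C0_def[symmetric] le_divide_eq)
qed

lemma Avg2_diff:
  assumes "continuous_on UNIV F" "continuous_on UNIV G"
  shows "Avg2 (\<lambda>p. F p - G p) = Avg2 F - Avg2 G"
proof -
  have "F integrable_on cbox (0,0) (2*pi,2*pi)" "G integrable_on cbox (0,0) (2*pi,2*pi)"
    by (rule integrable_continuous, rule continuous_on_subset[OF assms(1)], simp)
       (rule integrable_continuous, rule continuous_on_subset[OF assms(2)], simp)
  then show ?thesis unfolding Avg2_def by (simp add: integral_diff diff_divide_distrib)
qed

definition EE :: "(real \<times> real \<Rightarrow> real) \<Rightarrow> real \<Rightarrow> real" where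
  "EE P e = Avg2 (\<lambda>p. P p * exp (e * psi p))"

lemma taylor_E:
  assumes cP: "continuous_on UNIV P"
  shows "\<exists>C. \<forall>e. \<bar>e\<bar> \<le> 1 \<longrightarrow> \<bar>EE P e - (Avg2 P + e * Avg2 (\<lambda>p. P p * psi p)
           + e^2/2 * Avg2 (\<lambda>p. P p * (psi p * psi p)))\<bar> \<le> C * \<bar>e\<bar>^3"
proof -
  have "compact (P ` C0)" unfolding C0_def
    by (rule compact_continuous_image, rule continuous_on_subset[OF cP]) auto
  then obtain B where B: "\<And>p. p \<in> C0 \<Longrightarrow> \<bar>P p\<bar> \<le> B"
    using compact_imp_bounded[of "P ` C0"] unfolding bounded_iff by fastforce
  have cpsi: "continuous_on UNIV psi" by (rule cont_psi)
  show ?thesis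
  proof (intro exI allI impI)
    fix e :: real assume e: "\<bar>e\<bar> \<le> 1"
    let ?R = "\<lambda>p. P p * (exp (e * psi p) - (1 + e * psi p + (e * psi p)^2/2))"
    have c1: "continuous_on UNIV (\<lambda>p. P p * exp (e * psi p))" by (intro continuous_intros cP cpsi)
    have c2: "continuous_on UNIV (\<lambda>p. P p * psi p)" by (intro continuous_intros cP cpsi)
    have c3: "continuous_on UNIV (\<lambda>p. P p * (psi p * psi p))" by (intro continuous_intros cP cpsi)
    define h where "h = e^2/2"
    have "Avg2 ?R = Avg2 (\<lambda>p. P p * exp (e * psi p) - (P p + (e * (P p * psi p) + h * (P p * (psi p * psi p)))))"
      by (rule Avg2_cong) (simp add: h_def algebra_simps power2_eq_square)
    also have "\<dots> = EE P e - (Avg2 P + e * Avg2 (\<lambda>p. P p * psi p) + h * Avg2 (\<lambda>p. P p * (psi p * psi p)))"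
      unfolding EE_def
      by (simp add: Avg2_diff Avg2_add Avg2_cmult c1 c2 c3 cP continuous_intros cpsi)
    finally have eq: "EE P e - (Avg2 P + e * Avg2 (\<lambda>p. P p * psi p) + e^2/2 * Avg2 (\<lambda>p. P p * (psi p * psi p))) = Avg2 ?R"
      unfolding h_def ..
    have "\<bar>Avg2 ?R\<bar> \<le> B * (exp 3 / 6 * 27) * \<bar>e\<bar>^3"
    proof (rule Avg2_bound)
      show "continuous_on UNIV ?R" by (auto intro!: continuous_intros cP cpsi)
      fix p assume p: "p \<in> C0"
      have ea: "\<bar>e\<bar> * \<bar>psi p\<bar> \<le> 1 * 3"
        by (rule mult_mono) (use e psi_bound[of p] in auto)
      then have ep: "\<bar>e * psi p\<bar> \<le> 3" by (simp add: abs_mult)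
      have t: "\<bar>exp (e*psi p) - (1 + e*psi p + (e*psi p)^2/2)\<bar> \<le> exp 3/6 * \<bar>e*psi p\<bar>^3"
        by (rule exp_taylor[OF ep])
      have "\<bar>psi p\<bar>^3 \<le> 3^3" by (rule power_mono[OF psi_bound]) simp
      then have p3: "\<bar>e*psi p\<bar>^3 \<le> 27 * \<bar>e\<bar>^3"
      proof -
        assume a: "\<bar>psi p\<bar>^3 \<le> 3^3"
        have "\<bar>e\<bar>^3 * \<bar>psi p\<bar>^3 \<le> \<bar>e\<bar>^3 * 3^3" by (rule mult_left_mono[OF a]) simp
        then show ?thesis by (simp add: abs_mult power_mult_distrib mult.commute)
      qed
      have Bp: "\<bar>P p\<bar> \<le> B" using B p by blast
      then have B0: "0 \<le> B" by linarith
      have "exp 3/6 * \<bar>e*psi p\<bar>^3 \<le> exp 3/6 * (27 * \<bar>e\<bar>^3)"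
        using p3 by (intro mult_left_mono) auto
      with t have t2: "\<bar>exp (e*psi p) - (1 + e*psi p + (e*psi p)^2/2)\<bar> \<le> exp 3/6 * (27 * \<bar>e\<bar>^3)"
        by linarith
      have "\<bar>?R p\<bar> = \<bar>P p\<bar> * \<bar>exp (e*psi p) - (1 + e*psi p + (e*psi p)^2/2)\<bar>"
        by (simp add: abs_mult)
      also have "\<dots> \<le> B * (exp 3/6 * (27 * \<bar>e\<bar>^3))"
        by (rule mult_mono[OF Bp t2 B0]) simp
      finally show "\<bar>?R p\<bar> \<le> B * (exp 3 / 6 * 27) * \<bar>e\<bar>^3" by (simp add: mult.assoc)
    qed
    with eq show "\<bar>EE P e - (Avg2 P + e * Avg2 (\<lambda>p. P p * psi p) + e^2/2 * Avg2 (\<lambda>p. P p * (psi p * psi p)))\<bar>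
       \<le> B * (exp 3 / 6 * 27) * \<bar>e\<bar>^3" by simp
  qed
qed


definition bnd :: "(real \<Rightarrow> real) \<Rightarrow> nat \<Rightarrow> bool" where
  "bnd f n \<longleftrightarrow> (\<exists>C d. d > 0 \<and> (\<forall>e. e \<noteq> 0 \<and> \<bar>e\<bar> < d \<longrightarrow> \<bar>f e\<bar> \<le> C * \<bar>e\<bar>^n))"

lemma bndI: "d > 0 \<Longrightarrow> (\<And>e. e \<noteq> 0 \<Longrightarrow> \<bar>e\<bar> < d \<Longrightarrow> \<bar>f e\<bar> \<le> C * \<bar>e\<bar>^n) \<Longrightarrow> bnd f n"
  unfolding bnd_def by blast

lemma bndE:
  assumes "bnd f n"
  obtains C d where "d > 0" "C \<ge> 0" "\<And>e. e \<noteq> 0 \<Longrightarrow> \<bar>e\<bar> < d \<Longrightarrow> \<bar>f e\<bar> \<le> C * \<bar>e\<bar>^n"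
proof -
  obtain C d where d: "d > 0" and h: "\<And>e. e \<noteq> 0 \<Longrightarrow> \<bar>e\<bar> < d \<Longrightarrow> \<bar>f e\<bar> \<le> C * \<bar>e\<bar>^n"
    using assms unfolding bnd_def by blast
  have "\<bar>f e\<bar> \<le> max C 0 * \<bar>e\<bar>^n" if "e \<noteq> 0" "\<bar>e\<bar> < d" for e
  proof -
    have "C * \<bar>e\<bar>^n \<le> max C 0 * \<bar>e\<bar>^n" by (rule mult_right_mono) auto
    then show ?thesis using h[OF that] by linarith
  qed
  then show ?thesis using that[OF d, of "max C 0"] by auto
qed

lemma bnd_bigo: "bnd f n \<Longrightarrow> f \<in> O[at 0](\<lambda>e. e^n)"
proof -
  assume "bnd f n"
  then obtain C d where d: "d > 0" and h: "\<And>e. e \<noteq> 0 \<Longrightarrow> \<bar>e\<bar> < d \<Longrightarrow> \<bar>f e\<bar> \<le> C * \<bar>e\<bar>^n"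
    using bndE by blast
  have "eventually (\<lambda>e. norm (f e) \<le> C * norm (e^n)) (at (0::real))"
    unfolding eventually_at using d h by (intro exI[of _ d]) (auto simp: dist_real_def norm_power power_abs)
  then show ?thesis by (rule bigoI)
qed

lemma bnd_add: "bnd f n \<Longrightarrow> bnd g n \<Longrightarrow> bnd (\<lambda>e. f e + g e) n"
proof -
  assume "bnd f n" "bnd g n"
  then obtain C1 d1 C2 d2 where d: "d1 > 0" "d2 > 0"
    and h1: "\<And>e. e \<noteq> 0 \<Longrightarrow> \<bar>e\<bar> < d1 \<Longrightarrow> \<bar>f e\<bar> \<le> C1 * \<bar>e\<bar>^n"
    and h2: "\<And>e. e \<noteq> 0 \<Longrightarrow> \<bar>e\<bar> < d2 \<Longrightarrow> \<bar>g e\<bar> \<le> C2 * \<bar>e\<bar>^n"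
    by (metis bndE)
  show ?thesis
  proof (rule bndI[where d="min d1 d2" and C="C1 + C2"])
    fix e :: real assume "e \<noteq> 0" "\<bar>e\<bar> < min d1 d2"
    then show "\<bar>f e + g e\<bar> \<le> (C1 + C2) * \<bar>e\<bar>^n"
      using h1[of e] h2[of e] by (simp add: algebra_simps)
  qed (use d in auto)
qed

lemma bnd_neg: "bnd f n \<Longrightarrow> bnd (\<lambda>e. - f e) n"
  unfolding bnd_def by simp

lemma bnd_diff: "bnd f n \<Longrightarrow> bnd g n \<Longrightarrow> bnd (\<lambda>e. f e - g e) n"
  using bnd_add[of f n "\<lambda>e. - g e"] bnd_neg[of g n] by simp

lemma bnd_mult: "bnd f n \<Longrightarrow> bnd g m \<Longrightarrow> bnd (\<lambda>e. f e * g e) (n + m)"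
proof -
  assume "bnd f n" "bnd g m"
  then obtain C1 d1 C2 d2 where d: "d1 > 0" "d2 > 0" "C1 \<ge> 0" "C2 \<ge> 0"
    and h1: "\<And>e. e \<noteq> 0 \<Longrightarrow> \<bar>e\<bar> < d1 \<Longrightarrow> \<bar>f e\<bar> \<le> C1 * \<bar>e\<bar>^n"
    and h2: "\<And>e. e \<noteq> 0 \<Longrightarrow> \<bar>e\<bar> < d2 \<Longrightarrow> \<bar>g e\<bar> \<le> C2 * \<bar>e\<bar>^m"
    by (metis bndE)
  show ?thesis
  proof (rule bndI[where d="min d1 d2" and C="C1 * C2"])
    fix e :: real assume e: "e \<noteq> 0" "\<bar>e\<bar> < min d1 d2"
    have "\<bar>f e\<bar> * \<bar>g e\<bar> \<le> (C1 * \<bar>e\<bar>^n) * (C2 * \<bar>e\<bar>^m)"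
      by (rule mult_mono) (use h1[of e] h2[of e] e d in auto)
    then show "\<bar>f e * g e\<bar> \<le> C1 * C2 * \<bar>e\<bar>^(n+m)"
      by (simp add: abs_mult power_add algebra_simps)
  qed (use d in auto)
qed

lemma bnd_mono: "bnd f n \<Longrightarrow> m \<le> n \<Longrightarrow> bnd f m"
proof -
  assume "bnd f n" "m \<le> n"
  then obtain C d where d: "d > 0" "C \<ge> 0"
    and h: "\<And>e. e \<noteq> 0 \<Longrightarrow> \<bar>e\<bar> < d \<Longrightarrow> \<bar>f e\<bar> \<le> C * \<bar>e\<bar>^n"
    by (metis bndE)
  show ?thesis
  proof (rule bndI[where d="min d 1" and C=C])
    fix e :: real assume e: "e \<noteq> 0" "\<bar>e\<bar> < min d 1"
    have "\<bar>e\<bar>^n \<le> \<bar>e\<bar>^m" by (rule power_decreasing) (use \<open>m \<le> n\<close> e in auto)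
    then have "C * \<bar>e\<bar>^n \<le> C * \<bar>e\<bar>^m" using d by (simp add: mult_left_mono)
    then show "\<bar>f e\<bar> \<le> C * \<bar>e\<bar>^m" using h[of e] e by linarith
  qed (use d in auto)
qed

lemma bnd_poly: "bnd (\<lambda>e. c * e^n) n"
  by (rule bndI[where d=1 and C="\<bar>c\<bar>"]) (auto simp: abs_mult power_abs)

lemma bnd_cong: "bnd f n \<Longrightarrow> (\<And>e. f e = g e) \<Longrightarrow> bnd g n"
  by (metis ext)

lemma bnd_cong_ev:
  assumes "bnd f n" "d0 > 0" "\<And>e. e \<noteq> 0 \<Longrightarrow> \<bar>e\<bar> < d0 \<Longrightarrow> f e = g e"
  shows "bnd g n"
proof -
  obtain C d where d: "d > 0" and h: "\<And>e. e \<noteq> 0 \<Longrightarrow> \<bar>e\<bar> < d \<Longrightarrow> \<bar>f e\<bar> \<le> C * \<bar>e\<bar>^n"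
    using assms(1) using bndE by blast
  show ?thesis
  proof (rule bndI[where d="min d d0" and C=C])
    fix e :: real assume e: "e \<noteq> 0" "\<bar>e\<bar> < min d d0"
    then have "g e = f e" using assms(3)[of e] by simp
    then show "\<bar>g e\<bar> \<le> C * \<bar>e\<bar>^n" using h[of e] e by simp
  qed (use d assms(2) in auto)
qed

lemma bnd_inv:
  assumes "bnd (\<lambda>e. Z e - 1) 1"
  shows "bnd (\<lambda>e. 1 / Z e) 0"
proof -
  obtain C d where d: "d > 0" "C \<ge> 0" and h: "\<And>e. e \<noteq> 0 \<Longrightarrow> \<bar>e\<bar> < d \<Longrightarrow> \<bar>Z e - 1\<bar> \<le> C * \<bar>e\<bar>^1"
    using assms using bndE by blast
  show ?thesis
  proof (rule bndI[where d="min d (1 / (2 * C + 2))" and C=2])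
    fix e :: real assume e: "e \<noteq> 0" "\<bar>e\<bar> < min d (1 / (2 * C + 2))"
    have "C * \<bar>e\<bar> \<le> C * (1 / (2 * C + 2))" using e d by (intro mult_left_mono) auto
    also have "\<dots> \<le> 1/2" using d by (simp add: field_simps)
    finally have "\<bar>Z e - 1\<bar> \<le> 1/2" using h[of e] e by simp
    then have "Z e \<ge> 1/2" by linarith
    then show "\<bar>1 / Z e\<bar> \<le> 2 * \<bar>e\<bar>^0" by (simp add: field_simps)
  qed (use d in auto)
qed

lemma bnd_div_low:
  assumes "bnd f (n + k)" "c > 0" "d0 > 0" "\<And>e. e \<noteq> 0 \<Longrightarrow> \<bar>e\<bar> < d0 \<Longrightarrow> \<bar>g e\<bar> \<ge> c * \<bar>e\<bar>^k"
  shows "bnd (\<lambda>e. f e / g e) n"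
proof -
  obtain C d where d: "d > 0" "C \<ge> 0" and h: "\<And>e. e \<noteq> 0 \<Longrightarrow> \<bar>e\<bar> < d \<Longrightarrow> \<bar>f e\<bar> \<le> C * \<bar>e\<bar>^(n+k)"
    using assms(1) using bndE by blast
  show ?thesis
  proof (rule bndI[where d="min d d0" and C="C / c"])
    fix e :: real assume e: "e \<noteq> 0" "\<bar>e\<bar> < min d d0"
    have ek: "\<bar>e\<bar>^k > 0" using e by simp
    have g: "\<bar>g e\<bar> \<ge> c * \<bar>e\<bar>^k" using assms(4)[of e] e by simp
    have gp: "\<bar>g e\<bar> > 0" using g ek assms(2) by (smt (verit) mult_pos_pos)
    have "\<bar>f e / g e\<bar> = \<bar>f e\<bar> / \<bar>g e\<bar>" by (simp add: abs_divide)
    also have "\<dots> \<le> (C * \<bar>e\<bar>^(n+k)) / (c * \<bar>e\<bar>^k)"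
      by (rule frac_le) (use h[of e] e g ek assms(2) d in auto)
    also have "\<dots> = C / c * \<bar>e\<bar>^n" using ek assms(2) e(1) by (simp add: power_add field_simps)
    finally show "\<bar>f e / g e\<bar> \<le> C / c * \<bar>e\<bar>^n" .
  qed (use d assms in auto)
qed


lemma cont_exp_psi: "continuous_on UNIV (\<lambda>p. exp (e * psi p))"
  by (intro continuous_intros)

lemma Zeps_EE: "Zeps e = EE (\<lambda>p. 1) e"
proof -
  have "Zeps e = haar_avg (\<lambda>x. (\<lambda>p. exp (e * psi p)) (theta x))"
    unfolding Zeps_def by (simp add: phi_theta)
  also have "\<dots> = Avg2 (\<lambda>p. exp (e * psi p))" by (rule haar_theta[OF cont_exp_psi])
  finally show ?thesis by (simp add: EE_def)
qed

lemma Z_pos: "Zeps e > 0"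
proof -
  have "Avg2 (\<lambda>p. exp (e * psi p)) \<ge> exp (- (3 * \<bar>e\<bar>))"
  proof (rule Avg2_lower[OF cont_exp_psi])
    fix p
    have "\<bar>e\<bar> * \<bar>psi p\<bar> \<le> \<bar>e\<bar> * 3" by (rule mult_left_mono[OF psi_bound]) simp
    then have "\<bar>e * psi p\<bar> \<le> 3 * \<bar>e\<bar>" by (simp add: abs_mult mult.commute)
    then show "exp (- (3 * \<bar>e\<bar>)) \<le> exp (e * psi p)" by simp
  qed
  moreover have "exp (- (3 * \<bar>e\<bar>)) > 0" by simp
  ultimately have "Avg2 (\<lambda>p. exp (e * psi p)) > 0" by linarith
  then show ?thesis by (simp add: Zeps_EE EE_def)
qed

lemma feps_theta: "feps e x = exp (e * psi (theta x)) / Zeps e"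
  by (simp add: feps_def phi_theta)

lemma I_eq: "Ifun (feps e) = e * EE psi e / Zeps e"
proof -
  have "Ifun (feps e) = haar_avg (\<lambda>x. (\<lambda>p. e / Zeps e * (psi p * exp (e * psi p))) (theta x))"
    unfolding Ifun_def by (rule arg_cong[where f=haar_avg]) (rule ext, simp add: trH_eq[OF Z_pos] feps_theta)
  also have "\<dots> = Avg2 (\<lambda>p. e / Zeps e * (psi p * exp (e * psi p)))"
    by (rule haar_theta) (intro continuous_intros)
  also have "\<dots> = e / Zeps e * EE psi e" by (simp only: Avg2_cmult EE_def)
  finally show ?thesis by simp
qed

lemma Q_eq: "Qfun (feps e) = e^2 * EE T2f e / Zeps e"
proof -
  have "Qfun (feps e) = haar_avg (\<lambda>x. (\<lambda>p. e^2 / Zeps e * (T2f p * exp (e * psi p))) (theta x))"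
    unfolding Qfun_def by (rule arg_cong[where f=haar_avg]) (rule ext, simp add: trH2_eq[OF Z_pos] feps_theta)
  also have "\<dots> = Avg2 (\<lambda>p. e^2 / Zeps e * (T2f p * exp (e * psi p)))"
    by (rule haar_theta) (intro continuous_intros)
  also have "\<dots> = e^2 / Zeps e * EE T2f e" by (simp only: Avg2_cmult EE_def)
  finally show ?thesis by simp
qed

lemma D_eq: "Dfun (feps e) = (e^2 * EE Gf e + 2 * e^3 * EE T3f e) / Zeps e"
proof -
  have "Dfun (feps e) = haar_avg (\<lambda>x. (\<lambda>p. e^2 / Zeps e * (Gf p * exp (e * psi p))
      + 2 * e^3 / Zeps e * (T3f p * exp (e * psi p))) (theta x))"
    unfolding Dfun_def by (rule arg_cong[where f=haar_avg])
      (rule ext, simp add: trH3_eq[OF Z_pos] gradH_eq[OF Z_pos] feps_theta add_divide_distrib algebra_simps)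
  also have "\<dots> = Avg2 (\<lambda>p. e^2 / Zeps e * (Gf p * exp (e * psi p))
      + 2 * e^3 / Zeps e * (T3f p * exp (e * psi p)))"
    by (rule haar_theta) (intro continuous_intros)
  also have "\<dots> = e^2 / Zeps e * EE Gf e + 2 * e^3 / Zeps e * EE T3f e"
    by (simp only: Avg2_add Avg2_cmult EE_def continuous_intros cont_Gf cont_T3f cont_psi)
  finally show ?thesis by (simp add: add_divide_distrib)
qed

lemma taylor_bnd:
  assumes "continuous_on UNIV P"
  shows "bnd (\<lambda>e. EE P e - (Avg2 P + e * Avg2 (\<lambda>p. P p * psi p)
           + e^2/2 * Avg2 (\<lambda>p. P p * (psi p * psi p)))) 3"
proof -
  obtain C where C: "\<And>e. \<bar>e\<bar> \<le> 1 \<Longrightarrow> \<bar>EE P e - (Avg2 P + e * Avg2 (\<lambda>p. P p * psi p)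
           + e^2/2 * Avg2 (\<lambda>p. P p * (psi p * psi p)))\<bar> \<le> C * \<bar>e\<bar>^3"
    using taylor_E[OF assms] by blast
  show ?thesis by (rule bndI[where d=1 and C=C]) (use C in auto)
qed

lemma bnd_mult': "bnd f n \<Longrightarrow> bnd g m \<Longrightarrow> k = n + m \<Longrightarrow> bnd (\<lambda>e. f e * g e) k"
  using bnd_mult by blast

lemma bnd_id: "bnd (\<lambda>e. e) 1"
  using bnd_poly[of 1 1] by simp

lemma bnd_poly': "m \<le> n \<Longrightarrow> bnd (\<lambda>e. c * e^n) m"
  using bnd_mono[OF bnd_poly] by blast

lemma Zb: "bnd (\<lambda>e. Zeps e - 1) 2"
proof -
  have t: "bnd (\<lambda>e. EE (\<lambda>p. 1) e - (1 + e * 0 + e^2/2 * Avg2 (\<lambda>p. psi p * psi p))) 3"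
    using taylor_bnd[of "\<lambda>p. 1"] by (simp add: avg_one avg_psi)
  have "bnd (\<lambda>e. (EE (\<lambda>p. 1) e - (1 + e * 0 + e^2/2 * Avg2 (\<lambda>p. psi p * psi p)))
        + (Avg2 (\<lambda>p. psi p * psi p) / 2) * e^2) 2"
    by (rule bnd_add[OF bnd_mono[OF t] bnd_poly]) simp
  then show ?thesis by (rule bnd_cong) (simp add: Zeps_EE)
qed

lemma Zi: "bnd (\<lambda>e. 1 / Zeps e) 0"
  by (rule bnd_inv, rule bnd_mono[OF Zb]) simp

lemma NI: "bnd (\<lambda>e. EE psi e - (3/2 * e + 3/4 * e^2)) 3"
proof -
  have a3: "Avg2 (\<lambda>p. psi p * (psi p * psi p)) = 3/2" using avg_psi3 by (simp add: mult.assoc)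
  show ?thesis using taylor_bnd[OF cont_psi]
    by (simp add: avg_psi avg_psi2 a3) (erule bnd_cong, simp add: algebra_simps)
qed

lemma NQ: "bnd (\<lambda>e. EE T2f e - (3/2 + 3/8 * e)) 2"
proof -
  have t: "bnd (\<lambda>e. EE T2f e - (3/2 + e * (3/8) + e^2/2 * Avg2 (\<lambda>p. T2f p * (psi p * psi p)))) 3"
    using taylor_bnd[OF cont_T2f] by (simp add: avg_T2 avg_T2psi)
  have "bnd (\<lambda>e. (EE T2f e - (3/2 + e * (3/8) + e^2/2 * Avg2 (\<lambda>p. T2f p * (psi p * psi p))))
        + (Avg2 (\<lambda>p. T2f p * (psi p * psi p)) / 2) * e^2) 2"
    by (rule bnd_add[OF bnd_mono[OF t] bnd_poly]) simp
  then show ?thesis by (rule bnd_cong) (simp add: algebra_simps)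
qed

lemma NG: "bnd (\<lambda>e. EE Gf e - (3/2 + 3/16 * e)) 2"
proof -
  have t: "bnd (\<lambda>e. EE Gf e - (3/2 + e * (3/16) + e^2/2 * Avg2 (\<lambda>p. Gf p * (psi p * psi p)))) 3"
    using taylor_bnd[OF cont_Gf] by (simp add: avg_G avg_Gpsi)
  have "bnd (\<lambda>e. (EE Gf e - (3/2 + e * (3/16) + e^2/2 * Avg2 (\<lambda>p. Gf p * (psi p * psi p))))
        + (Avg2 (\<lambda>p. Gf p * (psi p * psi p)) / 2) * e^2) 2"
    by (rule bnd_add[OF bnd_mono[OF t] bnd_poly]) simp
  then show ?thesis by (rule bnd_cong) (simp add: algebra_simps)
qed

lemma NT: "bnd (\<lambda>e. EE T3f e - (-3/16)) 1"
proof -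
  define A1 where "A1 = Avg2 (\<lambda>p. T3f p * psi p)"
  define A2 where "A2 = Avg2 (\<lambda>p. T3f p * (psi p * psi p))"
  have t: "bnd (\<lambda>e. EE T3f e - (-3/16 + e * A1 + e^2/2 * A2)) 3"
    using taylor_bnd[OF cont_T3f] by (simp add: avg_T3 A1_def A2_def)
  have "bnd (\<lambda>e. (EE T3f e - (-3/16 + e * A1 + e^2/2 * A2)) + A1 * e^1 + (A2/2) * e^2) 1"
    by (rule bnd_add[OF bnd_add[OF bnd_mono[OF t] bnd_poly] bnd_poly']) simp_all
  then show ?thesis by (rule bnd_cong) (simp add: algebra_simps)
qed


lemma Zne: "Zeps e \<noteq> 0" using Z_pos[of e] by simp

lemma mZ: "bnd (\<lambda>e. 1 - Zeps e) 2"
  using bnd_neg[OF Zb] by (rule bnd_cong) simp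

lemma aIb: "bnd (\<lambda>e. 3/2*e^2 + 3/4*e^3) 2"
  by (rule bnd_add[OF bnd_poly bnd_poly']) simp
lemma aQb: "bnd (\<lambda>e. 3/2*e^2 + 3/8*e^3) 2"
  by (rule bnd_add[OF bnd_poly bnd_poly']) simp
lemma aDb: "bnd (\<lambda>e. 3/2*e^2 - 3/16*e^3) 2"
  by (rule bnd_diff[OF bnd_poly bnd_poly']) simp

lemma rI: "bnd (\<lambda>e. Ifun (feps e) - (3/2 * e^2 + 3/4 * e^3)) 4"
proof -
  have b1: "bnd (\<lambda>e. e * (EE psi e - (3/2 * e + 3/4 * e^2))) 4"
    by (rule bnd_mult'[OF bnd_id NI]) simp
  have b2: "bnd (\<lambda>e. (3/2*e^2 + 3/4*e^3) * (1 - Zeps e)) 4"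
    by (rule bnd_mult'[OF aIb mZ]) simp
  have b3: "bnd (\<lambda>e. (e * (EE psi e - (3/2 * e + 3/4 * e^2)) + (3/2*e^2 + 3/4*e^3) * (1 - Zeps e)) * (1 / Zeps e)) 4"
    by (rule bnd_mult'[OF bnd_add[OF b1 b2] Zi]) simp
  show ?thesis
    by (rule bnd_cong[OF b3]) (simp add: I_eq Zne field_simps power2_eq_square power3_eq_cube)
qed

lemma rQ: "bnd (\<lambda>e. Qfun (feps e) - (3/2 * e^2 + 3/8 * e^3)) 4"
proof -
  have e2: "bnd (\<lambda>e. e^2) 2" using bnd_poly[of 1 2] by simp
  have b1: "bnd (\<lambda>e. e^2 * (EE T2f e - (3/2 + 3/8 * e))) 4"
    by (rule bnd_mult'[OF e2 NQ]) simp
  have b2: "bnd (\<lambda>e. (3/2*e^2 + 3/8*e^3) * (1 - Zeps e)) 4"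
    by (rule bnd_mult'[OF aQb mZ]) simp
  have b3: "bnd (\<lambda>e. (e^2 * (EE T2f e - (3/2 + 3/8 * e)) + (3/2*e^2 + 3/8*e^3) * (1 - Zeps e)) * (1 / Zeps e)) 4"
    by (rule bnd_mult'[OF bnd_add[OF b1 b2] Zi]) simp
  show ?thesis
    by (rule bnd_cong[OF b3]) (simp add: Q_eq Zne field_simps power2_eq_square power3_eq_cube)
qed

lemma rD: "bnd (\<lambda>e. Dfun (feps e) - (3/2 * e^2 - 3/16 * e^3)) 4"
proof -
  have e2: "bnd (\<lambda>e. e^2) 2" using bnd_poly[of 1 2] by simp
  have b1: "bnd (\<lambda>e. e^2 * (EE Gf e - (3/2 + 3/16 * e))) 4"
    by (rule bnd_mult'[OF e2 NG]) simp
  have b1': "bnd (\<lambda>e. (2 * e^3) * (EE T3f e - (-3/16))) 4"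
    by (rule bnd_mult'[OF bnd_poly NT]) simp
  have b2: "bnd (\<lambda>e. (3/2*e^2 - 3/16*e^3) * (1 - Zeps e)) 4"
    by (rule bnd_mult'[OF aDb mZ]) simp
  have b3: "bnd (\<lambda>e. (e^2 * (EE Gf e - (3/2 + 3/16 * e)) + (2 * e^3) * (EE T3f e - (-3/16))
       + (3/2*e^2 - 3/16*e^3) * (1 - Zeps e)) * (1 / Zeps e)) 4"
    by (rule bnd_mult'[OF bnd_add[OF bnd_add[OF b1 b1'] b2] Zi]) simp
  show ?thesis
    by (rule bnd_cong[OF b3]) (simp add: D_eq Zne field_simps power2_eq_square power3_eq_cube)
qed

lemma alg1:
  fixes I D Q e :: real
  shows "I * D - Q^2 - (- 9/32 * e^5) = -9/32 * e^6 + (3/2*e^2 + 3/4*e^3) * (D - (3/2 * e^2 - 3/16 * e^3))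
     + (I - (3/2 * e^2 + 3/4 * e^3)) * (3/2*e^2 - 3/16*e^3)
     + (I - (3/2 * e^2 + 3/4 * e^3)) * (D - (3/2 * e^2 - 3/16 * e^3))
     - (2 * (3/2*e^2 + 3/8*e^3)) * (Q - (3/2 * e^2 + 3/8 * e^3))
     - (Q - (3/2 * e^2 + 3/8 * e^3)) * (Q - (3/2 * e^2 + 3/8 * e^3))"
  by algebra

lemma N6: "bnd (\<lambda>e. Ifun (feps e) * Dfun (feps e) - (Qfun (feps e))^2 - (- 9/32 * e^5)) 6"
proof -
  have a2Q: "bnd (\<lambda>e. 2 * (3/2*e^2 + 3/8*e^3)) 2"
    using bnd_add[OF bnd_poly[of 3 2] bnd_poly'[of 2 3 "3/4"]] by (simp add: algebra_simps)
  have t1: "bnd (\<lambda>e. -9/32 * e^6) 6" by (rule bnd_poly)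
  have t2: "bnd (\<lambda>e. (3/2*e^2 + 3/4*e^3) * (Dfun (feps e) - (3/2 * e^2 - 3/16 * e^3))) 6"
    by (rule bnd_mult'[OF aIb rD]) simp
  have t3: "bnd (\<lambda>e. (Ifun (feps e) - (3/2 * e^2 + 3/4 * e^3)) * (3/2*e^2 - 3/16*e^3)) 6"
    by (rule bnd_mult'[OF rI aDb]) simp
  have t4: "bnd (\<lambda>e. (Ifun (feps e) - (3/2 * e^2 + 3/4 * e^3)) * (Dfun (feps e) - (3/2 * e^2 - 3/16 * e^3))) 6"
    by (rule bnd_mono[OF bnd_mult'[OF rI rD refl]]) simp
  have t5: "bnd (\<lambda>e. (2 * (3/2*e^2 + 3/8*e^3)) * (Qfun (feps e) - (3/2 * e^2 + 3/8 * e^3))) 6"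
    by (rule bnd_mult'[OF a2Q rQ]) simp
  have t6: "bnd (\<lambda>e. (Qfun (feps e) - (3/2 * e^2 + 3/8 * e^3)) * (Qfun (feps e) - (3/2 * e^2 + 3/8 * e^3))) 6"
    by (rule bnd_mono[OF bnd_mult'[OF rQ rQ refl]]) simp
  have "bnd (\<lambda>e. -9/32 * e^6 + (3/2*e^2 + 3/4*e^3) * (Dfun (feps e) - (3/2 * e^2 - 3/16 * e^3))
     + (Ifun (feps e) - (3/2 * e^2 + 3/4 * e^3)) * (3/2*e^2 - 3/16*e^3)
     + (Ifun (feps e) - (3/2 * e^2 + 3/4 * e^3)) * (Dfun (feps e) - (3/2 * e^2 - 3/16 * e^3))
     - (2 * (3/2*e^2 + 3/8*e^3)) * (Qfun (feps e) - (3/2 * e^2 + 3/8 * e^3))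
     - (Qfun (feps e) - (3/2 * e^2 + 3/8 * e^3)) * (Qfun (feps e) - (3/2 * e^2 + 3/8 * e^3))) 6"
    by (intro bnd_add bnd_diff t1 t2 t3 t4 t5 t6)
  then show ?thesis by (rule bnd_cong) (rule alg1[symmetric])
qed

lemma q3: "bnd (\<lambda>e. Qfun (feps e) - 3/2 * e^2) 3"
  using bnd_add[OF bnd_mono[OF rQ, of 3] bnd_poly[of "3/8" 3]] by (simp add: algebra_simps)

lemma q2: "bnd (\<lambda>e. Qfun (feps e) + 3/2 * e^2) 2"
  using bnd_add[OF bnd_mono[OF q3, of 2] bnd_poly[of 3 2]] by (simp add: algebra_simps)

lemma num6: "bnd (\<lambda>e. Ifun (feps e) * Dfun (feps e) - (Qfun (feps e))^2 + e/8 * (Qfun (feps e))^2) 6"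
proof -
  have "bnd (\<lambda>e. (Qfun (feps e) - 3/2 * e^2) * (Qfun (feps e) + 3/2 * e^2)) 5"
    by (rule bnd_mult'[OF q3 q2]) simp
  then have "bnd (\<lambda>e. (1/8 * e^1) * ((Qfun (feps e) - 3/2 * e^2) * (Qfun (feps e) + 3/2 * e^2))) 6"
    by (rule bnd_mult'[OF bnd_poly]) simp
  from bnd_add[OF N6 this] show ?thesis
    by (rule bnd_cong) (simp add: algebra_simps power2_eq_square power3_eq_cube eval_nat_numeral)
qed

lemma Qlow: "\<exists>d0>0. \<forall>e. e \<noteq> 0 \<and> \<bar>e\<bar> < d0 \<longrightarrow> Qfun (feps e) \<ge> e^2"
proof -
  obtain C d where d: "d > 0" "C \<ge> 0"
    and h: "\<And>e. e \<noteq> 0 \<Longrightarrow> \<bar>e\<bar> < d \<Longrightarrow> \<bar>Qfun (feps e) - 3/2 * e^2\<bar> \<le> C * \<bar>e\<bar>^3"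
    using bndE[OF q3] by blast
  show ?thesis
  proof (intro exI[of _ "min d (1 / (2 * C + 2))"] conjI allI impI)
    show "min d (1 / (2 * C + 2)) > 0" using d by simp
    fix e :: real assume e: "e \<noteq> 0 \<and> \<bar>e\<bar> < min d (1 / (2 * C + 2))"
    have "C * \<bar>e\<bar> \<le> C * (1 / (2 * C + 2))" using e d by (intro mult_left_mono) auto
    also have "\<dots> \<le> 1/2" using d by (simp add: field_simps)
    finally have Ce: "C * \<bar>e\<bar> \<le> 1/2" .
    have "C * \<bar>e\<bar>^3 = (C * \<bar>e\<bar>) * e^2" by (simp add: power2_eq_square power3_eq_cube)
    also have "\<dots> \<le> 1/2 * e^2" by (rule mult_right_mono[OF Ce]) simp
    finally have "\<bar>Qfun (feps e) - 3/2 * e^2\<bar> \<le> 1/2 * e^2" using h[of e] e by simp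
    then show "Qfun (feps e) \<ge> e^2" by linarith
  qed
qed

lemma ratio: "bnd (\<lambda>e. Ifun (feps e) * Dfun (feps e) / (Qfun (feps e))^2 - (1 - 1/8 * e)) 2"
proof -
  obtain d0 where d0: "d0 > 0" and ql: "\<And>e. e \<noteq> 0 \<Longrightarrow> \<bar>e\<bar> < d0 \<Longrightarrow> Qfun (feps e) \<ge> e^2"
    using Qlow by blast
  have n: "bnd (\<lambda>e. Ifun (feps e) * Dfun (feps e) - (Qfun (feps e))^2 + e/8 * (Qfun (feps e))^2) (2 + 4)"
    using num6 by simp
  have low: "\<bar>(Qfun (feps e))^2\<bar> \<ge> 1 * \<bar>e\<bar>^4" if "e \<noteq> 0" "\<bar>e\<bar> < d0" for e
  proof -
    have "e^2 \<le> Qfun (feps e)" using ql[OF that] .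
    moreover have "0 \<le> e^2" by simp
    ultimately have "(e^2)^2 \<le> (Qfun (feps e))^2" by (rule power_mono)
    then show ?thesis by (simp add: power_abs flip: power_mult)
  qed
  have b: "bnd (\<lambda>e. (Ifun (feps e) * Dfun (feps e) - (Qfun (feps e))^2 + e/8 * (Qfun (feps e))^2) / (Qfun (feps e))^2) 2"
    by (rule bnd_div_low[OF n _ d0 low]) simp_all
  show ?thesis
  proof (rule bnd_cong_ev[OF b d0])
    fix e :: real assume e: "e \<noteq> 0" "\<bar>e\<bar> < d0"
    have "Qfun (feps e) \<ge> e^2" using ql[OF e] .
    moreover have "e^2 > 0" using e by simp
    ultimately have "Qfun (feps e) \<noteq> 0" by linarith
    then show "(Ifun (feps e) * Dfun (feps e) - (Qfun (feps e))^2 + e/8 * (Qfun (feps e))^2) / (Qfun (feps e))^2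
        = Ifun (feps e) * Dfun (feps e) / (Qfun (feps e))^2 - (1 - 1/8 * e)"
      by (simp add: field_simps)
  qed
qed

lemma e6: "(e::real)^6 = e * e^5" by (simp add: eval_nat_numeral)

lemma neg_right: "\<forall>\<^sub>F e in at_right 0. Ifun (feps e) * Dfun (feps e) - (Qfun (feps e))^2 < 0"
proof -
  obtain C d where d: "d > 0" "C \<ge> 0"
    and h: "\<And>e. e \<noteq> 0 \<Longrightarrow> \<bar>e\<bar> < d \<Longrightarrow>
       \<bar>Ifun (feps e) * Dfun (feps e) - (Qfun (feps e))^2 - (- 9/32 * e^5)\<bar> \<le> C * \<bar>e\<bar>^6"
    using bndE[OF N6] by blast
  show ?thesis unfolding eventually_at_right_field
  proof (intro exI[of _ "min d (1 / (4 * C + 4))"] conjI allI impI)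
    show "min d (1 / (4 * C + 4)) > (0::real)" using d by simp
    fix e :: real assume e0: "e > 0" and e: "e < min d (1 / (4 * C + 4))"
    have "C * e \<le> C * (1 / (4 * C + 4))" using e d by (intro mult_left_mono) auto
    also have "\<dots> \<le> 1/4" using d by (simp add: field_simps)
    finally have Ce: "C * e \<le> 1/4" .
    have e5: "e^5 > 0" using e0 by simp
    have "C * \<bar>e\<bar>^6 = (C * e) * e^5" using e0 by (simp add: e6)
    also have "\<dots> \<le> 1/4 * e^5" by (rule mult_right_mono[OF Ce]) (use e5 in simp)
    finally have "\<bar>Ifun (feps e) * Dfun (feps e) - (Qfun (feps e))^2 - (- 9/32 * e^5)\<bar> \<le> 1/4 * e^5"
      using h[of e] e e0 by simp
    then show "Ifun (feps e) * Dfun (feps e) - (Qfun (feps e))^2 < 0" using e5 by linarith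
  qed
qed

theorem proposition3p2:
  shows "(\<lambda>e. Ifun (feps e) - (3/2 * e^2 + 3/4 * e^3)) \<in> O[at 0](\<lambda>e. e^4) \<and>
         (\<lambda>e. Qfun (feps e) - (3/2 * e^2 + 3/8 * e^3)) \<in> O[at 0](\<lambda>e. e^4) \<and>
         (\<lambda>e. Dfun (feps e) - (3/2 * e^2 - 3/16 * e^3)) \<in> O[at 0](\<lambda>e. e^4) \<and>
         (\<lambda>e. Ifun (feps e) * Dfun (feps e) - (Qfun (feps e))^2 - (- 9/32 * e^5))
           \<in> O[at 0](\<lambda>e. e^6) \<and>
         (\<lambda>e. Ifun (feps e) * Dfun (feps e) / (Qfun (feps e))^2 - (1 - 1/8 * e))
           \<in> O[at 0](\<lambda>e. e^2) \<and>
         (\<forall>\<^sub>F e in at_right 0. Ifun (feps e) * Dfun (feps e) - (Qfun (feps e))^2 < 0)"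
  using bnd_bigo[OF rI] bnd_bigo[OF rQ] bnd_bigo[OF rD] bnd_bigo[OF N6] bnd_bigo[OF ratio] neg_right
  by blast

end
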